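(* In the standing setting below, assume $c$ satisfies Loeper's property and let $\phi:\mathbb{X}\to\mathbb{R}$ be alternative $c$-convex. Fix $y\in\mathbb{Y}$, $h\in\mathbb{R}$ and let $f(x)=-c(x,y)+h$ and $S=\{x\in\mathbb{X}:\phi(x)\le f(x)\}$. Then $S$ is $c$-convex with respect to $y$, i.e. $\{-D_yc(x,y):x\in S\}$ is convex. Moreover, if $\phi(x')<f(x')$ for some $x'\in\mathbb{X}$, then $S$ has non-empty interior and the interior of $S$ is contained in $\{x\in\mathbb{X}:\phi(x)<f(x)\}$.
   Context: Standing setting: $\mathbb{X},\mathbb{Y}\subset\mathbb{R}^n$ are compact with non-empty interior; $c:\mathbb{X}\times\mathbb{Y}\to\mathbb{R}$ has continuous $D_xc$, $D_yc$, and continuous mixed second derivatives with $D^2_{xy}c=(D^2_{yx}c)^T$; for each $x$ the map $y\mapsto -D_xc(x,y)$ is injective on $\mathbb{Y}$ and for each $y$ the map $x\mapsto -D_yc(x,y)$ is injective on $\mathbb{X}$; $D^2_{xy}c(x,y)$ is invertible everywhere; for every $y$ the set $[\mathbb{X}]_y=\{-D_yc(x,y):x\in\mathbb{X}\}$ is convex and for every $x$ the set $\{-D_xc(x,y):y\in\mathbb{Y}\}$ is convex. $\exp^c_y:[\mathbb{X}]_y\to\mathbb{X}$ is the inverse of $x\mapsto -D_yc(x,y)$; the $c$-segment with respect to $y$ from $x_0$ to $x_1$ is $\{\exp^c_y(tp_1+(1-t)p_0):t\in[0,1]\}$ with $p_i=-D_yc(x_i,y)$. Loeper's property: for all $x_0,x_1\in\mathbb{X}$,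 $y_0,y\in\mathbb{Y}$ and every $x_t$ on the $c$-segment with respect to $y_0$ from $x_0$ to $x_1$, $-c(x_t,y)+c(x_t,y_0)\le\max\{-c(x_i,y)+c(x_i,y_0):i=0,1\}$. $c$-chord: for $X_i=(x_i,u_i)\in\mathbb{X}\times\mathbb{R}$, $F_{X_0X_1}(x)=\sup\{-c(x,y)+h: y\in\mathbb{Y},h\in\mathbb{R},-c(x_i,y)+h\le u_i, i=0,1\}$. $\phi$ is alternative $c$-convex if for all $x_0,x_1\in\mathbb{X}$, with $X_i=(x_i,\phi(x_i))$, $\phi(x)\le F_{X_0X_1}(x)$ for all $x\in\mathbb{X}$. Interior is taken in $\mathbb{R}^n$. *)

theory Defs
  imports "HOL-Analysis.Analysis"
begin

definition standing_setting ::
  "(real^'n) set \<Rightarrow> (real^'n) set \<Rightarrow> (real^'n \<Rightarrow> real^'n \<Rightarrow> real)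
   \<Rightarrow> (real^'n \<Rightarrow> real^'n \<Rightarrow> real^'n) \<Rightarrow> (real^'n \<Rightarrow> real^'n \<Rightarrow> real^'n)
   \<Rightarrow> (real^'n \<Rightarrow> real^'n \<Rightarrow> real^'n^'n) \<Rightarrow> (real^'n \<Rightarrow> real^'n \<Rightarrow> real^'n^'n) \<Rightarrow> bool" where
  "standing_setting X Y c Dxc Dyc Dxy Dyx \<longleftrightarrow>
     compact X \<and> compact Y \<and> interior X \<noteq> {} \<and> interior Y \<noteq> {} \<and>
     (\<forall>x\<in>X. \<forall>y\<in>Y. ((\<lambda>x'. c x' y) has_derivative (\<lambda>v. Dxc x y \<bullet> v)) (at x within X)) \<and>
     (\<forall>x\<in>X. \<forall>y\<in>Y. ((\<lambda>y'. c x y') has_derivative (\<lambda>v. Dyc x y \<bullet> v)) (at y within Y)) \<and>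
     continuous_on (X \<times> Y) (\<lambda>(x,y). Dxc x y) \<and>
     continuous_on (X \<times> Y) (\<lambda>(x,y). Dyc x y) \<and>
     (\<forall>x\<in>X. \<forall>y\<in>Y. ((\<lambda>y'. Dxc x y') has_derivative (\<lambda>v. Dxy x y *v v)) (at y within Y)) \<and>
     (\<forall>x\<in>X. \<forall>y\<in>Y. ((\<lambda>x'. Dyc x' y) has_derivative (\<lambda>v. Dyx x y *v v)) (at x within X)) \<and>
     continuous_on (X \<times> Y) (\<lambda>(x,y). Dxy x y) \<and>
     continuous_on (X \<times> Y) (\<lambda>(x,y). Dyx x y) \<and>
     (\<forall>x\<in>X. \<forall>y\<in>Y. Dxy x y = transpose (Dyx x y)) \<and>
     (\<forall>x\<in>X. inj_on (\<lambda>y. - Dxc x y) Y) \<and>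
     (\<forall>y\<in>Y. inj_on (\<lambda>x. - Dyc x y) X) \<and>
     (\<forall>x\<in>X. \<forall>y\<in>Y. invertible (Dxy x y)) \<and>
     (\<forall>y\<in>Y. convex ((\<lambda>x. - Dyc x y) ` X)) \<and>
     (\<forall>x\<in>X. convex ((\<lambda>y. - Dxc x y) ` Y))"

definition cexp :: "(real^'n) set \<Rightarrow> (real^'n \<Rightarrow> real^'n \<Rightarrow> real^'n) \<Rightarrow> real^'n \<Rightarrow> real^'n \<Rightarrow> real^'n" where
  "cexp X Dyc y p = inv_into X (\<lambda>x. - Dyc x y) p"

definition c_segment :: "(real^'n) set \<Rightarrow> (real^'n \<Rightarrow> real^'n \<Rightarrow> real^'n) \<Rightarrow> real^'n \<Rightarrow> real^'n \<Rightarrow> real^'n \<Rightarrow> (real^'n) set" where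
  "c_segment X Dyc y x0 x1 =
     {cexp X Dyc y (t *\<^sub>R (- Dyc x1 y) + (1 - t) *\<^sub>R (- Dyc x0 y)) | t. t \<in> {0..1}}"

definition loeper :: "(real^'n) set \<Rightarrow> (real^'n) set \<Rightarrow> (real^'n \<Rightarrow> real^'n \<Rightarrow> real)
   \<Rightarrow> (real^'n \<Rightarrow> real^'n \<Rightarrow> real^'n) \<Rightarrow> bool" where
  "loeper X Y c Dyc \<longleftrightarrow>
     (\<forall>x0\<in>X. \<forall>x1\<in>X. \<forall>y0\<in>Y. \<forall>y\<in>Y. \<forall>xt\<in>c_segment X Dyc y0 x0 x1.
        - c xt y + c xt y0 \<le> max (- c x0 y + c x0 y0) (- c x1 y + c x1 y0))"

definition c_chord :: "(real^'n) set \<Rightarrow> (real^'n \<Rightarrow> real^'n \<Rightarrow> real)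
   \<Rightarrow> real^'n \<Rightarrow> real \<Rightarrow> real^'n \<Rightarrow> real \<Rightarrow> real^'n \<Rightarrow> real" where
  "c_chord Y c x0 u0 x1 u1 x =
     Sup {- c x y + h | y h. y \<in> Y \<and> - c x0 y + h \<le> u0 \<and> - c x1 y + h \<le> u1}"

definition alt_c_convex :: "(real^'n) set \<Rightarrow> (real^'n) set \<Rightarrow> (real^'n \<Rightarrow> real^'n \<Rightarrow> real)
   \<Rightarrow> (real^'n \<Rightarrow> real) \<Rightarrow> bool" where
  "alt_c_convex X Y c \<phi> \<longleftrightarrow>
     (\<forall>x0\<in>X. \<forall>x1\<in>X. \<forall>x\<in>X. \<phi> x \<le> c_chord Y c x0 (\<phi> x0) x1 (\<phi> x1) x)"

end

theory Submission
  imports Defs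
begin

lemma ss_basic:
  assumes ss: "standing_setting X Y c Dxc Dyc Dxy Dyx" and y: "y \<in> Y"
  shows "compact X" "compact Y" "interior X \<noteq> {}"
    and "continuous_on X (\<lambda>x. - Dyc x y)"
    and "inj_on (\<lambda>x. - Dyc x y) X"
    and "convex ((\<lambda>x. - Dyc x y) ` X)"
    and "\<And>y'. y' \<in> Y \<Longrightarrow> continuous_on X (\<lambda>x. c x y')"
    and "\<And>x. x \<in> X \<Longrightarrow> continuous_on Y (\<lambda>y'. c x y')"
    and "\<And>x y'. x \<in> X \<Longrightarrow> y' \<in> Y \<Longrightarrow> ((\<lambda>x'. c x' y') has_derivative (\<lambda>v. Dxc x y' \<bullet> v)) (at x within X)"
    and "\<And>x. x \<in> X \<Longrightarrow> ((\<lambda>x'. - Dyc x' y) has_derivative (\<lambda>v. - (Dyx x y *v v))) (at x within X)"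
    and "\<And>x. x \<in> X \<Longrightarrow> invertible (Dyx x y)"
    and "\<And>x. x \<in> X \<Longrightarrow> inj_on (\<lambda>y. - Dxc x y) Y"
proof -
  note d = ss[unfolded standing_setting_def]
  show "compact X" "compact Y" "interior X \<noteq> {}" using d by auto
  show "inj_on (\<lambda>x. - Dyc x y) X" "convex ((\<lambda>x. - Dyc x y) ` X)" using d y by auto
  show "\<And>x. x \<in> X \<Longrightarrow> inj_on (\<lambda>y. - Dxc x y) Y" using d by auto
  have cj: "continuous_on (X \<times> Y) (\<lambda>(x,y). Dyc x y)" using d by auto
  have "continuous_on X (\<lambda>x. Dyc x y)"
    by (rule continuous_on_compose2[OF cj, of X "\<lambda>x. (x, y)", simplified])
       (use y in \<open>auto intro!: continuous_intros\<close>)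
  then show "continuous_on X (\<lambda>x. - Dyc x y)" by (intro continuous_intros)
  show "\<And>y'. y' \<in> Y \<Longrightarrow> continuous_on X (\<lambda>x. c x y')"
    using d by (intro has_derivative_continuous_on) blast
  show "\<And>x. x \<in> X \<Longrightarrow> continuous_on Y (\<lambda>y'. c x y')"
    using d by (intro has_derivative_continuous_on) blast
  show "\<And>x y'. x \<in> X \<Longrightarrow> y' \<in> Y \<Longrightarrow> ((\<lambda>x'. c x' y') has_derivative (\<lambda>v. Dxc x y' \<bullet> v)) (at x within X)"
    using d by blast
  show "\<And>x. x \<in> X \<Longrightarrow> ((\<lambda>x'. - Dyc x' y) has_derivative (\<lambda>v. - (Dyx x y *v v))) (at x within X)"
    using d y by (auto intro!: derivative_eq_intros)
  show "\<And>x. x \<in> X \<Longrightarrow> invertible (Dyx x y)"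
  proof -
    fix x assume x: "x \<in> X"
    have "invertible (transpose (Dyx x y))" using d x y by metis
    then show "invertible (Dyx x y)" using transpose_invertible by fastforce
  qed
qed

lemma cexp_facts:
  assumes ss: "standing_setting X Y c Dxc Dyc Dxy Dyx" and y: "y \<in> Y"
  shows "\<And>q. q \<in> (\<lambda>x. - Dyc x y) ` X \<Longrightarrow> cexp X Dyc y q \<in> X"
    and "\<And>q. q \<in> (\<lambda>x. - Dyc x y) ` X \<Longrightarrow> - Dyc (cexp X Dyc y q) y = q"
    and "\<And>x. x \<in> X \<Longrightarrow> cexp X Dyc y (- Dyc x y) = x"
    and "continuous_on ((\<lambda>x. - Dyc x y) ` X) (cexp X Dyc y)"
    and "inj_on (cexp X Dyc y) ((\<lambda>x. - Dyc x y) ` X)"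
proof -
  note b = ss_basic[OF ss y]
  show "\<And>q. q \<in> (\<lambda>x. - Dyc x y) ` X \<Longrightarrow> cexp X Dyc y q \<in> X"
    unfolding cexp_def by (auto intro: inv_into_into)
  show "\<And>q. q \<in> (\<lambda>x. - Dyc x y) ` X \<Longrightarrow> - Dyc (cexp X Dyc y q) y = q"
    unfolding cexp_def by (metis (mono_tags, lifting) f_inv_into_f)
  show e: "\<And>x. x \<in> X \<Longrightarrow> cexp X Dyc y (- Dyc x y) = x"
    unfolding cexp_def using b(5) by (metis (mono_tags, lifting) inv_into_f_f)
  show "continuous_on ((\<lambda>x. - Dyc x y) ` X) (cexp X Dyc y)"
    by (rule continuous_on_inv[OF b(4) b(1)]) (use e in auto)
  show "inj_on (cexp X Dyc y) ((\<lambda>x. - Dyc x y) ` X)"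
    unfolding cexp_def by (rule inj_on_inv_into) simp
qed

lemma interior_maps:
  assumes ss: "standing_setting X Y c Dxc Dyc Dxy Dyx" and y: "y \<in> Y"
  shows "\<And>x. x \<in> interior X \<Longrightarrow> - Dyc x y \<in> interior ((\<lambda>x. - Dyc x y) ` X)"
    and "\<And>q. q \<in> interior ((\<lambda>x. - Dyc x y) ` X) \<Longrightarrow> cexp X Dyc y q \<in> interior X"
proof -
  note b = ss_basic[OF ss y] and e = cexp_facts[OF ss y]
  have "open ((\<lambda>x. - Dyc x y) ` interior X)"
    by (rule invariance_of_domain)
       (auto intro: continuous_on_subset[OF b(4) interior_subset] inj_on_subset[OF b(5) interior_subset])
  then have "(\<lambda>x. - Dyc x y) ` interior X \<subseteq> interior ((\<lambda>x. - Dyc x y) ` X)"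
    by (meson image_mono interior_maximal interior_subset)
  then show "\<And>x. x \<in> interior X \<Longrightarrow> - Dyc x y \<in> interior ((\<lambda>x. - Dyc x y) ` X)" by auto
  have "open (cexp X Dyc y ` interior ((\<lambda>x. - Dyc x y) ` X))"
    by (rule invariance_of_domain)
       (auto intro: continuous_on_subset[OF e(4) interior_subset] inj_on_subset[OF e(5) interior_subset])
  moreover have "cexp X Dyc y ` interior ((\<lambda>x. - Dyc x y) ` X) \<subseteq> X"
    using e(1) interior_subset by blast
  ultimately have "cexp X Dyc y ` interior ((\<lambda>x. - Dyc x y) ` X) \<subseteq> interior X"
    by (meson interior_maximal)
  then show "\<And>q. q \<in> interior ((\<lambda>x. - Dyc x y) ` X) \<Longrightarrow> cexp X Dyc y q \<in> interior X" by auto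
qed


lemma inv_lower_bound:
  assumes ss: "standing_setting X Y c Dxc Dyc Dxy Dyx" and y: "y \<in> Y"
  shows "\<exists>m>0. \<forall>x\<in>X. \<forall>v. m * norm v \<le> norm (Dyx x y *v v)"
proof -
  note b = ss_basic[OF ss y]
  note d = ss[unfolded standing_setting_def]
  have cj: "continuous_on (X \<times> Y) (\<lambda>(x,y). Dyx x y)" using d by auto
  have cD: "continuous_on X (\<lambda>x. Dyx x y)"
    by (rule continuous_on_compose2[OF cj, of X "\<lambda>x. (x, y)", simplified])
       (use y in \<open>auto intro!: continuous_intros\<close>)
  let ?S = "X \<times> sphere (0::real^'a) 1"
  have cS: "compact ?S" using b(1) by (intro compact_Times compact_sphere)
  have "X \<noteq> {}" using b(3) interior_subset by blast
  then have nS: "?S \<noteq> {}" by (simp add: sphere_eq_empty)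
  have cF: "continuous_on ?S (\<lambda>p. norm (Dyx (fst p) y *v snd p))"
  proof -
    have "continuous_on ?S (\<lambda>p. Dyx (fst p) y)"
      by (rule continuous_on_compose2[OF cD]) (auto intro!: continuous_intros)
    then show ?thesis
      by (auto simp: matrix_vector_mult_def intro!: continuous_intros)
  qed
  obtain p0 where p0: "p0 \<in> ?S" and mn: "\<And>p. p \<in> ?S \<Longrightarrow> norm (Dyx (fst p0) y *v snd p0) \<le> norm (Dyx (fst p) y *v snd p)"
    using continuous_attains_inf[OF cS nS cF] by blast
  define m where "m = norm (Dyx (fst p0) y *v snd p0)"
  have "m > 0"
  proof (rule ccontr)
    assume "\<not> m > 0"
    then have z: "Dyx (fst p0) y *v snd p0 = 0" unfolding m_def by simp
    have "invertible (Dyx (fst p0) y)" using b(11) p0 by auto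
    then obtain B where "B ** Dyx (fst p0) y = mat 1"
      unfolding invertible_def by blast
    then have "snd p0 = B *v (Dyx (fst p0) y *v snd p0)"
      by (simp add: matrix_vector_mul_assoc)
    then have "snd p0 = 0" using z by simp
    then show False using p0 by auto
  qed
  moreover have "\<forall>x\<in>X. \<forall>v. m * norm v \<le> norm (Dyx x y *v v)"
  proof (intro ballI allI)
    fix x v assume x: "x \<in> X"
    show "m * norm v \<le> norm (Dyx x y *v v)"
    proof (cases "v = 0")
      case True then show ?thesis by simp
    next
      case False
      have "(x, v /\<^sub>R norm v) \<in> ?S" using x False by simp
      then have "m \<le> norm (Dyx x y *v (v /\<^sub>R norm v))" using mn m_def by fastforce
      also have "\<dots> = norm (Dyx x y *v v) / norm v"
        by (simp add: matrix_vector_mult_scaleR divide_inverse_commute)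
      finally show ?thesis using False by (simp add: field_simps)
    qed
  qed
  ultimately show ?thesis by blast
qed

lemma Dxc_bound:
  assumes ss: "standing_setting X Y c Dxc Dyc Dxy Dyx"
  shows "\<exists>B>0. \<forall>x\<in>X. \<forall>y\<in>Y. norm (Dxc x y) \<le> B"
proof -
  note d = ss[unfolded standing_setting_def]
  have "compact ((\<lambda>(x,y). Dxc x y) ` (X \<times> Y))"
    using d by (intro compact_continuous_image compact_Times) auto
  then obtain B where "B > 0" "\<forall>z\<in>(\<lambda>(x,y). Dxc x y) ` (X \<times> Y). norm z \<le> B"
    using compact_imp_bounded bounded_pos by metis
  then show ?thesis by auto
qed

lemma cexp_deriv:
  assumes ss: "standing_setting X Y c Dxc Dyc Dxy Dyx" and y: "y \<in> Y"
    and m: "m > 0" and mb: "\<forall>x\<in>X. \<forall>v. m * norm v \<le> norm (Dyx x y *v v)"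
    and q: "q \<in> interior ((\<lambda>x. - Dyc x y) ` X)"
  shows "\<exists>M. (cexp X Dyc y has_derivative (\<lambda>u. - (M *v u))) (at q) \<and> (\<forall>u. norm (M *v u) \<le> norm u / m)"
proof -
  note b = ss_basic[OF ss y] and e = cexp_facts[OF ss y] and im = interior_maps[OF ss y]
  let ?x = "cexp X Dyc y q"
  have xi: "?x \<in> interior X" using im(2)[OF q] .
  have qK: "q \<in> (\<lambda>x. - Dyc x y) ` X" using q interior_subset by blast
  have xX: "?x \<in> X" using xi interior_subset by blast
  have dT: "((\<lambda>x'. - Dyc x' y) has_derivative (\<lambda>v. - (Dyx ?x y *v v))) (at ?x)"
    using b(10)[OF xX] at_within_interior[OF xi] by simp
  obtain B where B1: "Dyx ?x y ** B = mat 1" and B2: "B ** Dyx ?x y = mat 1"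
    using b(11)[OF xX] unfolding invertible_def by blast
  have der: "(cexp X Dyc y has_derivative (\<lambda>u. - (B *v u))) (at q)"
  proof (rule has_derivative_inverse_basic[where g="cexp X Dyc y" and y=q, OF dT])
    show "bounded_linear (\<lambda>u. - (B *v u))" by (intro bounded_linear_minus) simp
    show "(\<lambda>u. - (B *v u)) \<circ> (\<lambda>v. - (Dyx ?x y *v v)) = id"
      using B2 by (auto simp: fun_eq_iff matrix_vector_mul_assoc vec.neg)
    show "continuous (at q) (cexp X Dyc y)"
      using continuous_on_interior[OF e(4) q] .
    show "open (interior ((\<lambda>x. - Dyc x y) ` X))" by simp
    show "q \<in> interior ((\<lambda>x. - Dyc x y) ` X)" using q .
    show "\<And>z. z \<in> interior ((\<lambda>x. - Dyc x y) ` X) \<Longrightarrow> - Dyc (cexp X Dyc y z) y = z"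
      using e(2) interior_subset by blast
  qed
  have "\<forall>u. norm (B *v u) \<le> norm u / m"
  proof
    fix u
    have "m * norm (B *v u) \<le> norm (Dyx ?x y *v (B *v u))" using mb xX by blast
    also have "\<dots> = norm u" using B1 by (simp add: matrix_vector_mul_assoc)
    finally show "norm (B *v u) \<le> norm u / m" using m by (simp add: field_simps)
  qed
  then show ?thesis using der by blast
qed

lemma c_lip:
  assumes ss: "standing_setting X Y c Dxc Dyc Dxy Dyx" and y: "y \<in> Y"
    and m: "m > 0" and mb: "\<forall>x\<in>X. \<forall>v. m * norm v \<le> norm (Dyx x y *v v)"
    and Bd: "\<forall>x\<in>X. \<forall>y\<in>Y. norm (Dxc x y) \<le> Bd" and Bd0: "0 \<le> Bd"
    and a: "a \<in> (\<lambda>x. - Dyc x y) ` X" and bi: "b \<in> interior ((\<lambda>x. - Dyc x y) ` X)"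
    and y': "y' \<in> Y"
  shows "\<bar>c (cexp X Dyc y b) y' - c (cexp X Dyc y a) y'\<bar> \<le> Bd / m * norm (b - a)"
proof -
  note bs = ss_basic[OF ss y] and e = cexp_facts[OF ss y] and im = interior_maps[OF ss y]
  define K where "K = (\<lambda>x. - Dyc x y) ` X"
  have cK: "convex K" using bs(6) K_def by simp
  have bK: "b \<in> K" using bi interior_subset K_def by blast
  have aK: "a \<in> K" using a K_def by simp
  define l where "l = (\<lambda>t::real. a + t *\<^sub>R (b - a))"
  have lK: "l t \<in> K" if "t \<in> {0..1}" for t
  proof -
    have "(1 - t) *\<^sub>R a + t *\<^sub>R b \<in> K" using convexD[OF cK aK bK, of "1-t" t] that by auto
    moreover have "(1 - t) *\<^sub>R a + t *\<^sub>R b = l t" unfolding l_def by (simp add: algebra_simps)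
    ultimately show ?thesis by simp
  qed
  have lI: "l t \<in> interior K" if "t \<in> {0<..1}" for t
  proof -
    have "a - t *\<^sub>R (a - b) \<in> interior K"
      using mem_interior_convex_shrink[OF cK bi[folded K_def] aK, of t] that by auto
    moreover have "a - t *\<^sub>R (a - b) = l t" unfolding l_def by (simp add: algebra_simps)
    ultimately show ?thesis by simp
  qed
  define psi where "psi = (\<lambda>t. c (cexp X Dyc y (l t)) y')"
  have cont: "continuous_on {0..1} psi"
  proof -
    have c1: "continuous_on {0..1} l" unfolding l_def by (intro continuous_intros)
    have c2: "continuous_on {0..1} (\<lambda>t. cexp X Dyc y (l t))"
      by (rule continuous_on_compose2[OF e(4) c1]) (use lK K_def in auto)
    show ?thesis unfolding psi_def
      by (rule continuous_on_compose2[OF bs(7)[OF y'] c2]) (use lK K_def e(1) in auto)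
  qed
  have "\<forall>t\<in>{0<..<1}. \<exists>D. (psi has_derivative D) (at t) \<and> (\<forall>s. norm (D s) \<le> Bd / m * norm (b - a) * \<bar>s\<bar>)"
  proof
    fix t :: real assume t: "t \<in> {0<..<1}"
    have ti: "l t \<in> interior K" using lI t by auto
    obtain M where dM: "(cexp X Dyc y has_derivative (\<lambda>u. - (M *v u))) (at (l t))"
      and nM: "\<forall>u. norm (M *v u) \<le> norm u / m"
      using cexp_deriv[OF ss y m mb ti[unfolded K_def]] by blast
    let ?x = "cexp X Dyc y (l t)"
    have xi: "?x \<in> interior X" using im(2) ti K_def by blast
    then have xX: "?x \<in> X" using interior_subset by blast
    have dc: "((\<lambda>x'. c x' y') has_derivative (\<lambda>v. Dxc ?x y' \<bullet> v)) (at ?x)"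
      using bs(9)[OF xX y'] at_within_interior[OF xi] by simp
    have dl: "(l has_derivative (\<lambda>s. s *\<^sub>R (b - a))) (at t)"
      unfolding l_def by (auto intro!: derivative_eq_intros)
    have d2: "((\<lambda>t. cexp X Dyc y (l t)) has_derivative (\<lambda>s. - (M *v (s *\<^sub>R (b - a))))) (at t)"
      using has_derivative_compose[OF dl dM] .
    have d3: "(psi has_derivative (\<lambda>s. Dxc ?x y' \<bullet> (- (M *v (s *\<^sub>R (b - a)))))) (at t)"
      unfolding psi_def using has_derivative_compose[OF d2 dc] .
    have "norm (Dxc ?x y' \<bullet> (- (M *v (s *\<^sub>R (b - a))))) \<le> Bd / m * norm (b - a) * \<bar>s\<bar>" for s
    proof -
      have "norm (Dxc ?x y' \<bullet> (- (M *v (s *\<^sub>R (b - a))))) \<le> norm (Dxc ?x y') * norm (M *v (s *\<^sub>R (b - a)))"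
        by (metis Cauchy_Schwarz_ineq2 norm_minus_cancel real_norm_def)
      also have "\<dots> \<le> Bd * (norm (s *\<^sub>R (b - a)) / m)"
        using Bd xX y' nM[rule_format, of "s *\<^sub>R (b - a)"] Bd0 by (intro mult_mono) auto
      also have "\<dots> = Bd / m * norm (b - a) * \<bar>s\<bar>" by simp
      finally show ?thesis .
    qed
    then show "\<exists>D. (psi has_derivative D) (at t) \<and> (\<forall>s. norm (D s) \<le> Bd / m * norm (b - a) * \<bar>s\<bar>)"
      using d3 by blast
  qed
  then obtain D where D: "\<And>t. t\<in>{0<..<1} \<Longrightarrow> (psi has_derivative D t) (at t)"
    and Db: "\<And>t s. t\<in>{0<..<1} \<Longrightarrow> norm (D t s) \<le> Bd / m * norm (b - a) * \<bar>s\<bar>"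
    by metis
  obtain t where t: "t \<in> {0<..<1}" and "norm (psi 1 - psi 0) \<le> norm (D t (1 - 0))"
    using mvt_general[of 0 1 psi D] cont D by auto
  then have "norm (psi 1 - psi 0) \<le> Bd / m * norm (b - a)" using Db[OF t, of 1] by simp
  moreover have "psi 1 = c (cexp X Dyc y b) y'" "psi 0 = c (cexp X Dyc y a) y'"
    unfolding psi_def l_def by simp_all
  ultimately show ?thesis by simp
qed

lemma part1:
  assumes ss: "standing_setting X Y c Dxc Dyc Dxy Dyx" and lo: "loeper X Y c Dyc"
    and alt: "alt_c_convex X Y c \<phi>" and y: "y \<in> Y"
  shows "convex ((\<lambda>x. - Dyc x y) ` {x \<in> X. \<phi> x \<le> - c x y + h})"
proof -
  note bs = ss_basic[OF ss y] and e = cexp_facts[OF ss y]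
  show ?thesis unfolding convex_alt
  proof (intro ballI allI impI)
    fix q0 q1 and u :: real
    assume q0: "q0 \<in> (\<lambda>x. - Dyc x y) ` {x \<in> X. \<phi> x \<le> - c x y + h}"
      and q1: "q1 \<in> (\<lambda>x. - Dyc x y) ` {x \<in> X. \<phi> x \<le> - c x y + h}" and u: "0 \<le> u \<and> u \<le> 1"
    obtain x0 where x0: "x0 \<in> X" "\<phi> x0 \<le> - c x0 y + h" and q0e: "q0 = - Dyc x0 y" using q0 by blast
    obtain x1 where x1: "x1 \<in> X" "\<phi> x1 \<le> - c x1 y + h" and q1e: "q1 = - Dyc x1 y" using q1 by blast
    define q where "q = (1 - u) *\<^sub>R q0 + u *\<^sub>R q1"
    have qK: "q \<in> (\<lambda>x. - Dyc x y) ` X"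
      unfolding q_def using convexD[OF bs(6), of q0 q1 "1 - u" u] q0e q1e x0 x1 u by auto
    define w where "w = cexp X Dyc y q"
    have wX: "w \<in> X" and Tw: "- Dyc w y = q" using e(1,2)[OF qK] w_def by auto
    have wseg: "w \<in> c_segment X Dyc y x0 x1"
      unfolding c_segment_def w_def q_def q0e q1e using u by (auto intro!: exI[of _ u] simp: add.commute)
    let ?A = "{- c w y' + h' | y' h'. y' \<in> Y \<and> - c x0 y' + h' \<le> \<phi> x0 \<and> - c x1 y' + h' \<le> \<phi> x1}"
    have "\<phi> w \<le> c_chord Y c x0 (\<phi> x0) x1 (\<phi> x1) w"
      using alt x0 x1 wX unfolding alt_c_convex_def by blast
    also have "\<dots> = Sup ?A" unfolding c_chord_def ..
    also have "\<dots> \<le> - c w y + h"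
    proof (rule cSup_least)
      show "?A \<noteq> {}"
        using y by (intro ex_in_conv[THEN iffD1] exI[of _ "- c w y + min (\<phi> x0 + c x0 y) (\<phi> x1 + c x1 y)"])
           (auto intro!: exI[of _ y] exI[of _ "min (\<phi> x0 + c x0 y) (\<phi> x1 + c x1 y)"])
    next
      fix v assume "v \<in> ?A"
      then obtain y' h' where v: "v = - c w y' + h'" and y': "y' \<in> Y"
        and h0: "- c x0 y' + h' \<le> \<phi> x0" and h1: "- c x1 y' + h' \<le> \<phi> x1" by blast
      have "- c w y' + c w y \<le> max (- c x0 y' + c x0 y) (- c x1 y' + c x1 y)"
        using lo x0(1) x1(1) y y' wseg unfolding loeper_def by blast
      then show "v \<le> - c w y + h" using v h0 h1 x0(2) x1(2) by (auto simp: max_def split: if_splits)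
    qed
    finally show "(1 - u) *\<^sub>R q0 + u *\<^sub>R q1 \<in> (\<lambda>x. - Dyc x y) ` {x \<in> X. \<phi> x \<le> - c x y + h}"
      using wX Tw q_def by (auto intro!: image_eqI[of _ _ w])
  qed
qed

lemma strict_open:
  assumes ss: "standing_setting X Y c Dxc Dyc Dxy Dyx"
    and alt: "alt_c_convex X Y c \<phi>" and y: "y \<in> Y"
    and x': "x' \<in> X" and sx: "\<phi> x' < - c x' y + h"
  shows "\<exists>U. open U \<and> U \<noteq> {} \<and> U \<subseteq> interior ((\<lambda>x. - Dyc x y) ` X) \<and>
     (\<forall>q\<in>U. \<phi> (cexp X Dyc y q) < - c (cexp X Dyc y q) y + h)"
proof -
  note bs = ss_basic[OF ss y] and e = cexp_facts[OF ss y] and im = interior_maps[OF ss y]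
  define K where "K = (\<lambda>x. - Dyc x y) ` X"
  obtain m where m: "m > 0" and mb: "\<forall>x\<in>X. \<forall>v. m * norm v \<le> norm (Dyx x y *v v)"
    using inv_lower_bound[OF ss y] by blast
  obtain Bd where Bd0: "Bd > 0" and Bd: "\<forall>x\<in>X. \<forall>y\<in>Y. norm (Dxc x y) \<le> Bd"
    using Dxc_bound[OF ss] by blast
  define L where "L = Bd / m"
  have L0: "L \<ge> 0" using Bd0 m L_def by simp
  define \<delta> where "\<delta> = - c x' y + h - \<phi> x'"
  have d0: "\<delta> > 0" using sx \<delta>_def by simp
  define \<eta> where "\<eta> = \<delta> / (2 * L + 1)"
  have e0: "\<eta> > 0" using d0 L0 \<eta>_def by simp
  have Le: "2 * L * \<eta> < \<delta>"
  proof -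
    have "\<delta> = (2 * L + 1) * \<eta>" using L0 \<eta>_def by simp
    then show ?thesis using e0 by (simp add: algebra_simps)
  qed
  define q' where "q' = - Dyc x' y"
  have q'K: "q' \<in> K" using x' q'_def K_def by simp
  define U where "U = interior K \<inter> ball q' \<eta>"
  have "open U" unfolding U_def by auto
  moreover have "U \<noteq> {}"
  proof -
    obtain x0 where "x0 \<in> interior X" using bs(3) by blast
    then have iK: "interior K \<noteq> {}" using im(1) K_def by blast
    have "closed K" unfolding K_def by (intro compact_imp_closed compact_continuous_image bs(1,4))
    then have "q' \<in> closure (interior K)"
      using convex_closure_interior[OF bs(6)[folded K_def] iK] q'K by simp
    then obtain q where "q \<in> interior K" "dist q q' < \<eta>"
      using e0 closure_approachable by blast
    then show ?thesis unfolding U_def by (auto simp: dist_commute)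
  qed
  moreover have "U \<subseteq> interior K" unfolding U_def by auto
  moreover have "\<forall>q\<in>U. \<phi> (cexp X Dyc y q) < - c (cexp X Dyc y q) y + h"
  proof
    fix q assume qU: "q \<in> U"
    then have qi: "q \<in> interior K" and qd: "norm (q - q') < \<eta>"
      unfolding U_def by (auto simp: dist_norm norm_minus_commute)
    define w where "w = cexp X Dyc y q"
    have wX: "w \<in> X" using e(1) qi interior_subset K_def w_def by blast
    have cx': "cexp X Dyc y q' = x'" using e(3)[OF x'] q'_def by simp
    have lip: "\<bar>c w y' - c x' y'\<bar> \<le> L * norm (q - q')" if "y' \<in> Y" for y'
      using c_lip[OF ss y m mb Bd _ q'K[unfolded K_def] qi[unfolded K_def] that] Bd0 cx' w_def L_def
      by simp
    let ?A = "{- c w y' + h' | y' h'. y' \<in> Y \<and> - c x' y' + h' \<le> \<phi> x' \<and> - c x' y' + h' \<le> \<phi> x'}"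
    have "\<phi> w \<le> c_chord Y c x' (\<phi> x') x' (\<phi> x') w"
      using alt x' wX unfolding alt_c_convex_def by blast
    also have "\<dots> = Sup ?A" unfolding c_chord_def ..
    also have "\<dots> \<le> \<phi> x' + L * norm (q - q')"
    proof (rule cSup_least)
      show "?A \<noteq> {}"
        using y by (intro ex_in_conv[THEN iffD1] exI[of _ "- c w y + (\<phi> x' + c x' y)"])
           (auto intro!: exI[of _ y] exI[of _ "\<phi> x' + c x' y"])
    next
      fix v assume "v \<in> ?A"
      then obtain y' h' where v: "v = - c w y' + h'" and y': "y' \<in> Y"
        and h0: "- c x' y' + h' \<le> \<phi> x'" by blast
      show "v \<le> \<phi> x' + L * norm (q - q')" using lip[OF y'] v h0 by linarith
    qed
    finally have p1: "\<phi> w \<le> \<phi> x' + L * norm (q - q')" .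
    have p2: "- c x' y + h - L * norm (q - q') \<le> - c w y + h" using lip[OF y] by linarith
    have "L * norm (q - q') \<le> L * \<eta>" using qd L0 by (intro mult_left_mono) auto
    then show "\<phi> w < - c w y + h" using p1 p2 Le \<delta>_def by linarith
  qed
  ultimately show ?thesis unfolding K_def by blast
qed

lemma conv_id1:
  fixes p q qz :: "real^'n" and \<epsilon> t :: real
  assumes e: "\<epsilon> > 0" and qz: "qz = p + \<epsilon> *\<^sub>R (p - q)" and t: "t = \<epsilon> / (1 + \<epsilon>)"
  shows "p = t *\<^sub>R q + (1 - t) *\<^sub>R qz"
proof -
  have a1: "(1 + \<epsilon>) * t = \<epsilon>" "(1 + \<epsilon>) * (1 - t) = 1" using t e by (simp_all add: field_simps)
  have "(1 + \<epsilon>) *\<^sub>R (t *\<^sub>R q + (1 - t) *\<^sub>R qz) = ((1 + \<epsilon>) * t) *\<^sub>R q + ((1 + \<epsilon>) * (1 - t)) *\<^sub>R qz"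
    by (simp add: scaleR_add_right)
  also have "\<dots> = (1 + \<epsilon>) *\<^sub>R p" unfolding a1 qz by (simp add: algebra_simps)
  finally show ?thesis using e by (metis scaleR_cancel_left add_pos_pos zero_less_one less_irrefl)
qed

lemma conv_id2:
  fixes p q qz a w :: "real^'n" and t :: real
  assumes p: "p = t *\<^sub>R q + (1 - t) *\<^sub>R qz" and t: "t > 0" and a: "a = q + (1/t) *\<^sub>R (w - p)"
  shows "w = t *\<^sub>R a + (1 - t) *\<^sub>R qz"
  using t by (simp add: a p algebra_simps)

lemma interior_strict:
  assumes ss: "standing_setting X Y c Dxc Dyc Dxy Dyx" and lo: "loeper X Y c Dyc"
    and alt: "alt_c_convex X Y c \<phi>" and y: "y \<in> Y"
    and q2i: "q2 \<in> interior ((\<lambda>x. - Dyc x y) ` X)"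
    and q2s: "\<phi> (cexp X Dyc y q2) < - c (cexp X Dyc y q2) y + h"
    and xi: "x \<in> interior {x \<in> X. \<phi> x \<le> - c x y + h}"
  shows "\<phi> x < - c x y + h"
proof (rule ccontr)
  assume nx: "\<not> \<phi> x < - c x y + h"
  note bs = ss_basic[OF ss y] and e = cexp_facts[OF ss y] and im = interior_maps[OF ss y]
  define K where "K = (\<lambda>x. - Dyc x y) ` X"
  define S where "S = {x \<in> X. \<phi> x \<le> - c x y + h}"
  obtain \<rho> where \<rho>: "\<rho> > 0" "ball x \<rho> \<subseteq> S" using xi S_def mem_interior by metis
  have xS: "x \<in> S" using xi S_def interior_subset by blast
  have xiX: "x \<in> interior X" using xi interior_mono[of S X] S_def by auto
  have xX: "x \<in> X" using xS S_def by simp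
  have fx: "- c x y + h \<le> \<phi> x" using nx by simp
  define p where "p = - Dyc x y"
  have pi: "p \<in> interior K" using im(1)[OF xiX] p_def K_def by simp
  obtain r0 where r0: "r0 > 0" "ball p r0 \<subseteq> K" using pi mem_interior by metis
  have cpx: "cexp X Dyc y p = x" using e(3)[OF xX] p_def by simp
  have pK: "p \<in> K" using pi interior_subset by blast
  obtain dE where dE: "dE > 0" "\<And>q. q \<in> K \<Longrightarrow> dist q p < dE \<Longrightarrow> dist (cexp X Dyc y q) x < \<rho>"
    using e(4)[unfolded continuous_on_iff, rule_format, OF pK[unfolded K_def] \<rho>(1)] cpx K_def by metis
  define x2 where "x2 = cexp X Dyc y q2"
  have q2K: "q2 \<in> K" using q2i interior_subset K_def by blast
  have x2X: "x2 \<in> X" and Tx2: "- Dyc x2 y = q2" using e(1,2) q2K K_def x2_def by auto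
  define \<epsilon> where "\<epsilon> = min r0 dE / (2 * (norm (p - q2) + 1))"
  have e0: "\<epsilon> > 0" using r0 dE unfolding \<epsilon>_def
    by (intro divide_pos_pos) (auto intro: add_nonneg_pos)
  have enorm: "\<epsilon> * norm (p - q2) < min r0 dE"
  proof -
    have "\<epsilon> * norm (p - q2) = min r0 dE * (norm (p - q2) / (2 * (norm (p - q2) + 1)))"
      unfolding \<epsilon>_def by simp
    also have "\<dots> < min r0 dE * 1"
    proof (intro mult_strict_left_mono)
      have h1: "0 < 2 * (norm (p - q2) + 1)"
        by (smt (verit) norm_ge_zero)
      have h2: "norm (p - q2) < 1 * (2 * (norm (p - q2) + 1))"
        by (smt (verit) norm_ge_zero)
      note h1 h2
      then show "norm (p - q2) / (2 * (norm (p - q2) + 1)) < 1" by (simp only: pos_divide_less_eq)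
    qed (use r0 dE in auto)
    finally show ?thesis by simp
  qed
  define qz where "qz = p + \<epsilon> *\<^sub>R (p - q2)"
  have dqz: "dist qz p < min r0 dE" using enorm e0 by (simp add: qz_def dist_norm)
  have qzK: "qz \<in> K" using dqz r0 by (auto simp: dist_commute)
  define z where "z = cexp X Dyc y qz"
  have zX: "z \<in> X" and Tz: "- Dyc z y = qz" using e(1,2) qzK K_def z_def by auto
  have zS: "z \<in> S" using dE(2)[OF qzK] dqz \<rho>(2) z_def by (auto simp: dist_commute)
  then have zf: "\<phi> z \<le> - c z y + h" using S_def by simp
  define mf where "mf = (\<lambda>y'. - c x y' + min (\<phi> x2 + c x2 y') (\<phi> z + c z y'))"
  have cmf: "continuous_on Y mf" unfolding mf_def
    using bs(8)[OF xX] bs(8)[OF x2X] bs(8)[OF zX] by (intro continuous_intros) auto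
  have "Y \<noteq> {}" using y by auto
  then obtain ys where ys: "ys \<in> Y" and ysmax: "\<And>y'. y' \<in> Y \<Longrightarrow> mf y' \<le> mf ys"
    using continuous_attains_sup[OF bs(2) _ cmf] by blast
  let ?A = "{- c x y' + h' | y' h'. y' \<in> Y \<and> - c x2 y' + h' \<le> \<phi> x2 \<and> - c z y' + h' \<le> \<phi> z}"
  have "\<phi> x \<le> c_chord Y c x2 (\<phi> x2) z (\<phi> z) x"
    using alt x2X zX xX unfolding alt_c_convex_def by blast
  also have "\<dots> = Sup ?A" unfolding c_chord_def ..
  also have "\<dots> \<le> mf ys"
  proof (rule cSup_least)
    show "?A \<noteq> {}"
      using y by (intro ex_in_conv[THEN iffD1] exI[of _ "- c x y + min (\<phi> x2 + c x2 y) (\<phi> z + c z y)"])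
         (auto intro!: exI[of _ y] exI[of _ "min (\<phi> x2 + c x2 y) (\<phi> z + c z y)"])
  next
    fix v assume "v \<in> ?A"
    then obtain y' h' where v: "v = - c x y' + h'" and y': "y' \<in> Y"
      and h0: "- c x2 y' + h' \<le> \<phi> x2" and h1: "- c z y' + h' \<le> \<phi> z" by blast
    have "v \<le> mf y'" using v h0 h1 unfolding mf_def by simp
    then show "v \<le> mf ys" using ysmax[OF y'] by simp
  qed
  finally have fmx: "- c x y + h \<le> mf ys" using fx by simp
  define hs where "hs = min (\<phi> x2 + c x2 ys) (\<phi> z + c z ys)"
  define G where "G = (\<lambda>w. - c w ys + c w y)"
  have Gx: "h - hs \<le> G x" using fmx unfolding mf_def hs_def G_def by simp
  have Gz: "G z \<le> h - hs" using zf unfolding hs_def G_def by simp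
  have Gx2: "G x2 < h - hs" using q2s x2_def unfolding hs_def G_def by simp
  have cG: "continuous_on K (\<lambda>q. G (cexp X Dyc y q))"
  proof -
    have "continuous_on X G" unfolding G_def using bs(7)[OF ys] bs(7)[OF y] by (intro continuous_intros)
    then show ?thesis
      by (rule continuous_on_compose2[OF _ e(4)[folded K_def]]) (use e(1) K_def in auto)
  qed
  obtain r1 where r1: "r1 > 0" "\<And>q. q \<in> K \<Longrightarrow> dist q q2 < r1 \<Longrightarrow> dist (G (cexp X Dyc y q)) (G x2) < h - hs - G x2"
    using cG[unfolded continuous_on_iff, rule_format, OF q2K, of "h - hs - G x2"] Gx2 x2_def by auto
  obtain r2 where r2: "r2 > 0" "ball q2 r2 \<subseteq> K" using q2i K_def mem_interior by metis
  define r where "r = min r1 r2"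
  have r: "r > 0" using r1 r2 r_def by simp
  have Gball: "G (cexp X Dyc y a) < h - hs" "a \<in> K" if "dist a q2 < r" for a
  proof -
    show aK: "a \<in> K" using that r2 r_def by (auto simp: dist_commute)
    have "dist (G (cexp X Dyc y a)) (G x2) < h - hs - G x2" using r1(2)[OF aK] that r_def by simp
    then show "G (cexp X Dyc y a) < h - hs" by (simp add: dist_real_def)
  qed
  define t where "t = \<epsilon> / (1 + \<epsilon>)"
  have t0: "t > 0" "t < 1"
    using e0 unfolding t_def by (auto intro!: divide_pos_pos simp: pos_divide_less_eq)
  have pcomb: "p = t *\<^sub>R q2 + (1 - t) *\<^sub>R qz" using conv_id1[OF e0 qz_def t_def] .
  obtain dT where dT: "dT > 0" "\<And>w. w \<in> X \<Longrightarrow> dist w x < dT \<Longrightarrow> dist (- Dyc w y) (- Dyc x y) < t * r"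
    using bs(4)[unfolded continuous_on_iff, rule_format, OF xX, of "t * r"] t0 r by (auto intro: mult_pos_pos)
  obtain \<rho>2 where \<rho>2: "\<rho>2 > 0" "ball x \<rho>2 \<subseteq> X" using xiX mem_interior by metis
  define \<delta> where "\<delta> = min dT \<rho>2"
  have locmax: "\<forall>w\<in>ball x \<delta>. G w \<le> G x"
  proof
    fix w assume wb: "w \<in> ball x \<delta>"
    then have wX: "w \<in> X" using \<rho>2 \<delta>_def by auto
    define q where "q = - Dyc w y"
    have dq: "dist q p < t * r" using dT(2)[OF wX] wb \<delta>_def q_def p_def by (auto simp: dist_commute)
    define a where "a = q2 + (1/t) *\<^sub>R (q - p)"
    have da: "dist a q2 < r"
    proof -
      have "dist a q2 = norm (q - p) / t" unfolding a_def dist_norm using t0 by simp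
      also have "\<dots> < r" using dq t0 by (simp add: dist_norm field_simps)
      finally show ?thesis .
    qed
    note aG = Gball[OF da]
    define x1 where "x1 = cexp X Dyc y a"
    have x1X: "x1 \<in> X" and Tx1: "- Dyc x1 y = a" using e(1,2) aG(2) K_def x1_def by auto
    have qcomb: "q = t *\<^sub>R a + (1 - t) *\<^sub>R qz" using conv_id2[OF pcomb t0(1) a_def] .
    have wq: "cexp X Dyc y q = w" using e(3)[OF wX] q_def by simp
    have wseg: "w \<in> c_segment X Dyc y z x1"
      unfolding c_segment_def Tx1 Tz using t0 wq qcomb by (auto intro!: exI[of _ t])
    have "- c w ys + c w y \<le> max (- c z ys + c z y) (- c x1 ys + c x1 y)"
      using lo zX x1X y ys wseg unfolding loeper_def by blast
    then show "G w \<le> G x" using Gz aG(1) Gx x1_def unfolding G_def by (auto simp: max_def split: if_splits)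
  qed
  have dG: "(G has_derivative (\<lambda>v. - (Dxc x ys \<bullet> v) + Dxc x y \<bullet> v)) (at x)"
  proof -
    have "(G has_derivative (\<lambda>v. - (Dxc x ys \<bullet> v) + Dxc x y \<bullet> v)) (at x within X)"
      unfolding G_def by (intro has_derivative_add has_derivative_minus bs(9) xX ys y)
    then show ?thesis using at_within_interior[OF xiX] by simp
  qed
  have "(\<lambda>v. - (Dxc x ys \<bullet> v) + Dxc x y \<bullet> v) = (\<lambda>v. 0)"
    by (rule differential_zero_maxmin[of x "ball x \<delta>" G]) (use dG locmax \<delta>_def dT \<rho>2 in auto)
  then have "(Dxc x y - Dxc x ys) \<bullet> (Dxc x y - Dxc x ys) = 0"
    by (metis (no_types, lifting) add.commute diff_conv_add_uminus inner_diff_left)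
  then have "- Dxc x ys = - Dxc x y" by simp
  then have "ys = y" using inj_onD[OF bs(12)[OF xX] _ ys y] by simp
  have "hs \<le> \<phi> x2 + c x2 y" using \<open>ys = y\<close> hs_def by simp
  then have "hs < h" using q2s x2_def by simp
  then have "mf ys < - c x y + h" using \<open>ys = y\<close> mf_def hs_def by simp
  then show False using fmx by simp
qed

theorem lemma4p5:
  fixes X Y :: "(real^'n) set" and c :: "real^'n \<Rightarrow> real^'n \<Rightarrow> real"
    and Dxc Dyc :: "real^'n \<Rightarrow> real^'n \<Rightarrow> real^'n"
    and Dxy Dyx :: "real^'n \<Rightarrow> real^'n \<Rightarrow> real^'n^'n"
    and \<phi> :: "real^'n \<Rightarrow> real" and y :: "real^'n" and h :: real
  assumes "standing_setting X Y c Dxc Dyc Dxy Dyx"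
    and "loeper X Y c Dyc"
    and "alt_c_convex X Y c \<phi>"
    and "y \<in> Y"
  shows "convex ((\<lambda>x. - Dyc x y) ` {x \<in> X. \<phi> x \<le> - c x y + h}) \<and>
         ((\<exists>x'\<in>X. \<phi> x' < - c x' y + h) \<longrightarrow>
           interior {x \<in> X. \<phi> x \<le> - c x y + h} \<noteq> {} \<and>
           interior {x \<in> X. \<phi> x \<le> - c x y + h} \<subseteq> {x \<in> X. \<phi> x < - c x y + h})"
proof -
  note ss = assms(1) and lo = assms(2) and alt = assms(3) and y = assms(4)
  note e = cexp_facts[OF ss y]
  have A: "convex ((\<lambda>x. - Dyc x y) ` {x \<in> X. \<phi> x \<le> - c x y + h})"
    by (rule part1[OF ss lo alt y])
  have B: "(\<exists>x'\<in>X. \<phi> x' < - c x' y + h) \<longrightarrow>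
           interior {x \<in> X. \<phi> x \<le> - c x y + h} \<noteq> {} \<and>
           interior {x \<in> X. \<phi> x \<le> - c x y + h} \<subseteq> {x \<in> X. \<phi> x < - c x y + h}"
  proof
    assume "\<exists>x'\<in>X. \<phi> x' < - c x' y + h"
    then obtain x' where x': "x' \<in> X" "\<phi> x' < - c x' y + h" by blast
    obtain U where U: "open U" "U \<noteq> {}" "U \<subseteq> interior ((\<lambda>x. - Dyc x y) ` X)"
      and Us: "\<forall>q\<in>U. \<phi> (cexp X Dyc y q) < - c (cexp X Dyc y q) y + h"
      using strict_open[OF ss alt y x'] by blast
    have UK: "U \<subseteq> (\<lambda>x. - Dyc x y) ` X" using U(3) interior_subset by blast
    have "open (cexp X Dyc y ` U)"
      by (rule invariance_of_domain)
         (use U(1) continuous_on_subset[OF e(4) UK] inj_on_subset[OF e(5) UK] in auto)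
    moreover have "cexp X Dyc y ` U \<subseteq> {x \<in> X. \<phi> x \<le> - c x y + h}"
      using Us UK e(1) by fastforce
    ultimately have "cexp X Dyc y ` U \<subseteq> interior {x \<in> X. \<phi> x \<le> - c x y + h}"
      by (rule interior_maximal[rotated])
    then have n1: "interior {x \<in> X. \<phi> x \<le> - c x y + h} \<noteq> {}" using U(2) by blast
    obtain q2 where q2: "q2 \<in> U" using U(2) by blast
    have n2: "interior {x \<in> X. \<phi> x \<le> - c x y + h} \<subseteq> {x \<in> X. \<phi> x < - c x y + h}"
    proof
      fix x assume xi: "x \<in> interior {x \<in> X. \<phi> x \<le> - c x y + h}"
      have "\<phi> x < - c x y + h"
        using interior_strict[OF ss lo alt y _ _ xi] q2 U(3) Us by blast
      moreover have "x \<in> X" using xi interior_subset by blast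
      ultimately show "x \<in> {x \<in> X. \<phi> x < - c x y + h}" by simp
    qed
    show "interior {x \<in> X. \<phi> x \<le> - c x y + h} \<noteq> {} \<and>
           interior {x \<in> X. \<phi> x \<le> - c x y + h} \<subseteq> {x \<in> X. \<phi> x < - c x y + h}"
      using n1 n2 by blast
  qed
  show ?thesis using A B by blast
qed

end
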